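(* There exists a perfect single-error-correcting code in $S_5$ with respect to the cyclic Kendall's $\tau$-distance; that is, there is a subset $\mathcal{C}\subseteq S_5$ such that for every $\pi\in S_5$ there is exactly one $\sigma\in\mathcal{C}$ with $d_\kappa(\sigma,\pi)\leq 1$.
   Context: $S_n$ denotes the set of all permutations of an $n$-element set, written as sequences $\sigma=[\sigma(1),\dots,\sigma(n)]$, where $\sigma(i)$ is the element in position $i$. A c-adjacent transposition applied to $\sigma$ either exchanges the entries in positions $i$ and $i+1$ for some $1\leq i\leq n-1$, or exchanges the entries $\sigma(1)$ and $\sigma(n)$ in positions $1$ and $n$. The cyclic Kendall's $\tau$-distance $d_\kappa(\sigma,\pi)$ is the minimum number of c-adjacent transpositions needed to transform $\sigma$ into $\pi$. *)

theory Defs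
  imports Main
begin

text \<open>Permutations of {1..n} written as sequences (lists); position i of the
paper corresponds to list index i-1.\<close>
definition Sym :: "nat \<Rightarrow> nat list set" where
  "Sym n = {xs. distinct xs \<and> set xs = {1..n}}"

definition swap_pos :: "'a list \<Rightarrow> nat \<Rightarrow> nat \<Rightarrow> 'a list" where
  "swap_pos xs i j = xs[i := xs ! j, j := xs ! i]"

definition c_adj :: "'a list \<Rightarrow> 'a list \<Rightarrow> bool" where
  "c_adj xs ys \<longleftrightarrow>
     (\<exists>i. i + 1 < length xs \<and> ys = swap_pos xs i (i + 1))
     \<or> (0 < length xs \<and> ys = swap_pos xs 0 (length xs - 1))"

definition d_kappa :: "'a list \<Rightarrow> 'a list \<Rightarrow> nat" where
  "d_kappa \<sigma> \<pi> = (LEAST k. (c_adj ^^ k) \<sigma> \<pi>)"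

end

theory Submission
  imports Defs "HOL-Combinatorics.Multiset_Permutations"
begin

definition nbrs :: "'a list \<Rightarrow> 'a list list" where
  "nbrs xs = map (\<lambda>i. swap_pos xs i (Suc i)) [0..<length xs - 1] @
     (if xs = [] then [] else [swap_pos xs 0 (length xs - 1)])"

fun bstep :: "nat list \<Rightarrow> nat list" where
  "bstep (x#y#zs) = (if y < x then y#x#zs else x # bstep (y#zs))"
| "bstep xs = xs"

definition CC :: "nat list list" where
 "CC = [[1,2,3,5,4], [5,2,4,3,1], [2,1,4,5,3], [1,5,2,4,3], [1,3,4,2,5], [3,1,5,2,4], [2,3,5,4,1], [4,1,2,3,5], [3,4,2,5,1], [1,4,5,3,2], [4,5,3,2,1], [5,1,3,4,2], [2,5,1,3,4], [3,2,1,4,5], [4,3,1,5,2], [2,4,3,1,5], [4,2,5,1,3], [3,5,4,1,2], [5,4,1,2,3], [5,3,2,1,4]]"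

lemma check: "list_all (\<lambda>\<pi>. length (filter (\<lambda>\<sigma>. \<sigma> = \<pi> \<or> \<sigma> \<in> set (nbrs \<pi>)) CC) = 1
   \<and> (bstep ^^ 10) \<pi> = [1,2,3,4,5]) (permutations_of_list_impl [1,2,3,4,5])"
  by code_simp

lemma check2: "list_all (\<lambda>\<sigma>. \<sigma> \<in> set (permutations_of_list_impl [1,2,3,4,5::nat])) CC"
  by code_simp

lemma nbrs_iff: "y \<in> set (nbrs x) \<longleftrightarrow> c_adj x y"
  unfolding nbrs_def c_adj_def by (cases x) auto

lemma swap_pos_twice: "i < length xs \<Longrightarrow> j < length xs \<Longrightarrow> swap_pos (swap_pos xs i j) i j = xs"
  unfolding swap_pos_def
  by (cases "i = j") (auto simp: nth_list_update list_update_swap intro!: nth_equalityI)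

lemma length_swap_pos[simp]: "length (swap_pos xs i j) = length xs"
  by (simp add: swap_pos_def)

lemma swap_pos_Nil[simp]: "swap_pos xs i j = [] \<longleftrightarrow> xs = []"
  by (simp add: swap_pos_def)

lemma c_adj_sym: "c_adj x y \<Longrightarrow> c_adj y x"
  unfolding c_adj_def
  by (auto simp: swap_pos_twice)

lemma c_adj_sym2: "c_adj\<^sup>*\<^sup>* x y \<Longrightarrow> c_adj\<^sup>*\<^sup>* y x"
  by (induction rule: rtranclp_induct) (auto intro: converse_rtranclp_into_rtranclp c_adj_sym)

lemma bstep_cases: "bstep xs = xs \<or> (\<exists>i. i + 1 < length xs \<and> bstep xs = swap_pos xs i (i+1))"
proof (induction xs rule: bstep.induct)
  case (1 x y zs)
  show ?case
  proof (cases "y < x")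
    case True
    then show ?thesis by (auto simp: swap_pos_def intro!: exI[of _ 0])
  next
    case False
    from "1"[OF False] show ?thesis
    proof
      assume "bstep (y # zs) = y # zs" then show ?thesis using False by simp
    next
      assume "\<exists>i. i + 1 < length (y # zs) \<and> bstep (y # zs) = swap_pos (y # zs) i (i + 1)"
      then obtain i where "i + 1 < length (y # zs)" "bstep (y # zs) = swap_pos (y # zs) i (i + 1)" by blast
      then show ?thesis using False
        by (intro disjI2 exI[of _ "Suc i"]) (simp add: swap_pos_def)
    qed
  qed
qed auto

lemma bstep_reach: "c_adj\<^sup>*\<^sup>* xs (bstep xs)"
  using bstep_cases[of xs] unfolding c_adj_def by auto

lemma bstep_pow_reach: "c_adj\<^sup>*\<^sup>* xs ((bstep ^^ n) xs)"
  by (induction n) (auto intro: rtranclp_trans bstep_reach)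

lemma mset15: "mset [1,2,3,4,5::nat] = mset_set {1..5}"
proof -
  have "{1..5::nat} = {1,2,3,4,5}" by auto
  then show ?thesis by simp
qed

lemma Sym5: "Sym 5 = set (permutations_of_list_impl [1,2,3,4,5::nat])"
  unfolding set_permutations_of_list_impl mset15 Sym_def
    permutations_of_set_altdef[OF finite_atLeastAtMost, symmetric] permutations_of_set_def
  by blast

lemma dk_le1:
  assumes "c_adj\<^sup>*\<^sup>* \<sigma> \<pi>"
  shows "d_kappa \<sigma> \<pi> \<le> 1 \<longleftrightarrow> \<sigma> = \<pi> \<or> c_adj \<sigma> \<pi>"
proof -
  obtain k where k: "(c_adj ^^ k) \<sigma> \<pi>" using assms rtranclp_imp_relpowp by metis
  show ?thesis
  proof
    assume "d_kappa \<sigma> \<pi> \<le> 1"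
    moreover have "(c_adj ^^ d_kappa \<sigma> \<pi>) \<sigma> \<pi>" unfolding d_kappa_def using k by (rule LeastI)
    ultimately show "\<sigma> = \<pi> \<or> c_adj \<sigma> \<pi>"
      by (cases "d_kappa \<sigma> \<pi>") auto
  next
    assume "\<sigma> = \<pi> \<or> c_adj \<sigma> \<pi>"
    then have "(c_adj ^^ 1) \<sigma> \<pi> \<or> (c_adj ^^ 0) \<sigma> \<pi>" by auto
    then show "d_kappa \<sigma> \<pi> \<le> 1" unfolding d_kappa_def
      by (metis Least_le le_trans zero_le_one)
  qed
qed

lemma checkP: "\<pi> \<in> Sym 5 \<Longrightarrow> length (filter (\<lambda>\<sigma>. \<sigma> = \<pi> \<or> \<sigma> \<in> set (nbrs \<pi>)) CC) = 1
   \<and> (bstep ^^ 10) \<pi> = [1,2,3,4,5]"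
  unfolding Sym5 by (rule bspec[OF check[unfolded list_all_iff]])

lemma CC_Sym: "\<sigma> \<in> set CC \<Longrightarrow> \<sigma> \<in> Sym 5"
  unfolding Sym5 by (rule bspec[OF check2[unfolded list_all_iff]])

lemma reach_sorted: "\<pi> \<in> Sym 5 \<Longrightarrow> c_adj\<^sup>*\<^sup>* \<pi> [1,2,3,4,5]"
proof -
  assume "\<pi> \<in> Sym 5"
  then have e: "(bstep ^^ 10) \<pi> = [1,2,3,4,5]" by (rule conjunct2[OF checkP])
  show ?thesis using bstep_pow_reach[of \<pi> 10] unfolding e .
qed

theorem mainTheorem3:
  shows "\<exists>C \<subseteq> Sym 5. \<forall>\<pi> \<in> Sym 5. \<exists>!\<sigma>. \<sigma> \<in> C \<and> d_kappa \<sigma> \<pi> \<le> 1"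
proof (intro exI[of _ "set CC"] conjI ballI)
  show "set CC \<subseteq> Sym 5" using CC_Sym by blast
  fix \<pi> assume p: "\<pi> \<in> Sym 5"
  have chk: "length (filter (\<lambda>\<sigma>. \<sigma> = \<pi> \<or> \<sigma> \<in> set (nbrs \<pi>)) CC) = 1"
    using checkP[OF p] by (rule conjunct1)
  have reach: "c_adj\<^sup>*\<^sup>* \<sigma> \<pi>" if "\<sigma> \<in> set CC" for \<sigma>
  proof -
    have "c_adj\<^sup>*\<^sup>* \<sigma> [1,2,3,4,5]" by (rule reach_sorted[OF CC_Sym[OF that]])
    moreover have "c_adj\<^sup>*\<^sup>* [1,2,3,4,5] \<pi>" by (rule c_adj_sym2[OF reach_sorted[OF p]])
    ultimately show ?thesis by (rule rtranclp_trans)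
  qed
  define P where "P = (\<lambda>\<sigma>. \<sigma> = \<pi> \<or> \<sigma> \<in> set (nbrs \<pi>))"
  have eq: "(\<sigma> \<in> set CC \<and> d_kappa \<sigma> \<pi> \<le> 1) \<longleftrightarrow> \<sigma> \<in> set CC \<and> P \<sigma>" for \<sigma>
  proof (cases "\<sigma> \<in> set CC")
    case True
    have "d_kappa \<sigma> \<pi> \<le> 1 \<longleftrightarrow> \<sigma> = \<pi> \<or> c_adj \<sigma> \<pi>" by (rule dk_le1[OF reach[OF True]])
    moreover have "c_adj \<sigma> \<pi> \<longleftrightarrow> \<sigma> \<in> set (nbrs \<pi>)" using nbrs_iff c_adj_sym by blast
    ultimately show ?thesis unfolding P_def using True by simp
  qed simp
  have chk': "length (filter P CC) = 1" using chk unfolding P_def .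
  have "length (filter P CC) = Suc 0" using chk' by simp
  then obtain a where a: "filter P CC = [a]" by (auto simp: length_Suc_conv)
  have "set (filter P CC) = {a}" unfolding a by simp
  then have "{x \<in> set CC. P x} = {a}" by (simp only: set_filter)
  then have h: "\<sigma> \<in> set CC \<and> P \<sigma> \<longleftrightarrow> \<sigma> = a" for \<sigma>
    by blast
  show "\<exists>!\<sigma>. \<sigma> \<in> set CC \<and> d_kappa \<sigma> \<pi> \<le> 1" unfolding eq
  proof (rule ex1I[of _ a])
    show "a \<in> set CC \<and> P a" using h by simp
    fix y assume "y \<in> set CC \<and> P y" then show "y = a" using h by simp
  qed
qed

end
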